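(* Let $G$ be an unmixed chordal graph and let $x$ be a simplicial vertex of $G$. Then $G\setminus\{y\}$ is unmixed for every $y\in N_G(x)$.
   Context: A graph is chordal if every cycle of length at least four has a chord; a vertex is simplicial if its neighbors form a clique. $N_G(x)$ is the set of neighbors of $x$, and $G\setminus\{y\}$ is the induced subgraph on $V(G)\setminus\{y\}$. A graph is unmixed if all its maximal independent sets have the same cardinality. *)

theory Defs
  imports Main
begin

definition graph :: "'a set \<Rightarrow> 'a set set \<Rightarrow> bool" where
  "graph V E \<longleftrightarrow> finite V \<and> (\<forall>e\<in>E. e \<subseteq> V \<and> card e = 2)"

definition adj :: "'a set set \<Rightarrow> 'a \<Rightarrow> 'a \<Rightarrow> bool" where
  "adj E u v \<longleftrightarrow> {u, v} \<in> E"

definition neighbors :: "'a set \<Rightarrow> 'a set set \<Rightarrow> 'a \<Rightarrow> 'a set" where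
  "neighbors V E x = {y \<in> V. adj E x y}"

definition del_vertex_edges :: "'a set set \<Rightarrow> 'a \<Rightarrow> 'a set set" where
  "del_vertex_edges E y = {e \<in> E. y \<notin> e}"

definition is_clique :: "'a set set \<Rightarrow> 'a set \<Rightarrow> bool" where
  "is_clique E S \<longleftrightarrow> (\<forall>u\<in>S. \<forall>v\<in>S. u \<noteq> v \<longrightarrow> adj E u v)"

definition simplicial :: "'a set \<Rightarrow> 'a set set \<Rightarrow> 'a \<Rightarrow> bool" where
  "simplicial V E x \<longleftrightarrow> x \<in> V \<and> is_clique E (neighbors V E x)"

definition is_cycle :: "'a set \<Rightarrow> 'a set set \<Rightarrow> 'a list \<Rightarrow> bool" where
  "is_cycle V E cs \<longleftrightarrow> length cs \<ge> 3 \<and> distinct cs \<and> set cs \<subseteq> V \<and>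
     (\<forall>i < length cs. adj E (cs ! i) (cs ! ((i + 1) mod length cs)))"

definition has_chord :: "'a set set \<Rightarrow> 'a list \<Rightarrow> bool" where
  "has_chord E cs \<longleftrightarrow> (\<exists>i < length cs. \<exists>j < length cs.
     j \<noteq> (i + 1) mod length cs \<and> i \<noteq> (j + 1) mod length cs \<and> i \<noteq> j \<and>
     adj E (cs ! i) (cs ! j))"

definition chordal :: "'a set \<Rightarrow> 'a set set \<Rightarrow> bool" where
  "chordal V E \<longleftrightarrow> (\<forall>cs. is_cycle V E cs \<and> length cs \<ge> 4 \<longrightarrow> has_chord E cs)"

definition independent :: "'a set \<Rightarrow> 'a set set \<Rightarrow> 'a set \<Rightarrow> bool" where
  "independent V E S \<longleftrightarrow> S \<subseteq> V \<and> (\<forall>u\<in>S. \<forall>v\<in>S. \<not> adj E u v)"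

definition maximal_independent :: "'a set \<Rightarrow> 'a set set \<Rightarrow> 'a set \<Rightarrow> bool" where
  "maximal_independent V E S \<longleftrightarrow> independent V E S \<and>
     (\<forall>T. independent V E T \<and> S \<subseteq> T \<longrightarrow> T = S)"

definition unmixed :: "'a set \<Rightarrow> 'a set set \<Rightarrow> bool" where
  "unmixed V E \<longleftrightarrow> (\<forall>S T. maximal_independent V E S \<and> maximal_independent V E T
     \<longrightarrow> card S = card T)"

end

theory Submission
  imports Defs
begin

lemma adj_sym: "adj E u v = adj E v u"
  unfolding adj_def by (simp add: insert_commute)

lemma adj_del: "adj (del_vertex_edges E y) u v \<longleftrightarrow> adj E u v \<and> u \<noteq> y \<and> v \<noteq> y"
  unfolding adj_def del_vertex_edges_def by auto

lemma key:
  assumes g: "graph V E" and s: "simplicial V E x" and yn: "y \<in> neighbors V E x"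
    and m: "maximal_independent (V - {y}) (del_vertex_edges E y) S"
  shows "maximal_independent V E S"
proof -
  have axy: "adj E x y" using yn unfolding neighbors_def by auto
  have yV: "y \<in> V" using yn unfolding neighbors_def by auto
  have xV: "x \<in> V" using s unfolding simplicial_def by auto
  have xy: "x \<noteq> y"
  proof
    assume "x = y"
    then have "{x} \<in> E" using axy unfolding adj_def by simp
    then show False using g unfolding graph_def by fastforce
  qed
  have indS: "independent (V - {y}) (del_vertex_edges E y) S" and
    maxS: "\<And>T. independent (V - {y}) (del_vertex_edges E y) T \<Longrightarrow> S \<subseteq> T \<Longrightarrow> T = S"
    using m unfolding maximal_independent_def by auto
  have SV: "S \<subseteq> V - {y}" using indS unfolding independent_def by auto
  have indG: "independent V E S"
    using indS SV unfolding independent_def by (auto simp: adj_del)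
  have notind: "\<not> independent V E (insert y S)"
  proof
    assume iy: "independent V E (insert y S)"
    have "x \<notin> S"
    proof
      assume "x \<in> S" then show False using iy axy unfolding independent_def by auto
    qed
    have "independent (V - {y}) (del_vertex_edges E y) (insert x S)"
      unfolding independent_def
    proof (intro conjI ballI)
      show "insert x S \<subseteq> V - {y}" using SV xV xy by auto
    next
      fix u v assume u: "u \<in> insert x S" and v: "v \<in> insert x S"
      show "\<not> adj (del_vertex_edges E y) u v"
      proof
        assume a: "adj (del_vertex_edges E y) u v"
        then have auv: "adj E u v" and uy: "u \<noteq> y" and vy: "v \<noteq> y" by (auto simp: adj_del)
        have clq: "\<And>z. z \<in> S \<Longrightarrow> adj E x z \<Longrightarrow> False"
        proof -
          fix z assume zS: "z \<in> S" and xz: "adj E x z"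
          have "z \<in> neighbors V E x" using zS SV xz unfolding neighbors_def by auto
          moreover have "z \<noteq> y" using zS SV by auto
          ultimately have "adj E z y" using s yn unfolding simplicial_def is_clique_def by blast
          then show False using iy zS unfolding independent_def by auto
        qed
        show False
        proof (cases "u = x")
          case True
          show ?thesis
          proof (cases "v = x")
            case True
            then have "{x} \<in> E" using auv \<open>u = x\<close> unfolding adj_def by simp
            then show False using g unfolding graph_def by fastforce
          next
            case False
            then show False using v auv True clq by auto
          qed
        next
          case False
          then have uS: "u \<in> S" using u by auto
          show ?thesis
          proof (cases "v = x")
            case True
            then show False using uS auv clq adj_sym by metis
          next
            case False
            then have "v \<in> S" using v by auto
            then show False using uS a indS unfolding independent_def by auto
          qed
        qed
      qed
    qed
    then have "insert x S = S" using maxS by blast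
    then show False using \<open>x \<notin> S\<close> by auto
  qed
  show ?thesis unfolding maximal_independent_def
  proof (intro conjI allI impI)
    show "independent V E S" by fact
  next
    fix T assume "independent V E T \<and> S \<subseteq> T"
    then have iT: "independent V E T" and ST: "S \<subseteq> T" by auto
    have "y \<notin> T"
    proof
      assume "y \<in> T"
      then have "insert y S \<subseteq> T" using ST by auto
      then have "independent V E (insert y S)" using iT unfolding independent_def by auto
      then show False using notind by simp
    qed
    then have "independent (V - {y}) (del_vertex_edges E y) T"
      using iT unfolding independent_def by (auto simp: adj_del)
    then show "T = S" using maxS ST by blast
  qed
qed

theorem proposition3p4:
  fixes V :: "'a set" and E :: "'a set set" and x y :: 'a
  assumes "graph V E"
    and "chordal V E"
    and "unmixed V E"
    and "simplicial V E x"
    and "y \<in> neighbors V E x"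
  shows "unmixed (V - {y}) (del_vertex_edges E y)"
  using key[OF assms(1) assms(4) assms(5)] assms(3) unfolding unmixed_def by blast

end
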